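(* Let $0<\epsilon<1$ and $\mathcal Q=[1/\epsilon]$. Let $0<\alpha<1$ be irrational and let $\gamma=p/q<\gamma'=p'/q'$ be the two consecutive elements of $\mathcal F_{\mathcal Q}$ with $\gamma<\alpha<\gamma'$. Then: (i) if $\frac pq<\alpha<\frac{p'-\epsilon}{q'}$, then $q_{N(\alpha,\epsilon)}(\alpha)=q$ and $d_{N(\alpha,\epsilon)}(\alpha)=q\alpha-p$; (ii) if $\frac{p'-\epsilon}{q'}\le\alpha\le\frac{p+\epsilon}{q}$, then $q_{N(\alpha,\epsilon)}(\alpha)=\min(q,q')$, and $d_{N(\alpha,\epsilon)}(\alpha)=q\alpha-p$ if $q<q'$, $d_{N(\alpha,\epsilon)}(\alpha)=p'-q'\alpha$ if $q'<q$; (iii) if $\frac{p+\epsilon}{q}<\alpha<\frac{p'}{q'}$, then $q_{N(\alpha,\epsilon)}(\alpha)=q'$ and $d_{N(\alpha,\epsilon)}(\alpha)=p'-q'\alpha$.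
   Context: $\mathcal F_{\mathcal Q}=\{p/q:1\le p\le q\le\mathcal Q,\ \gcd(p,q)=1\}$ is the set of Farey fractions of order $\le\mathcal Q$. For irrational $\alpha\in(0,1)$ with continued fraction partial quotients $a_1,a_2,\dots$ (i.e. $a_n=[1/T^{n-1}\alpha]$, $T(x)=1/x-[1/x]$), define $p_0=1,p_1=0$, $q_0=0,q_1=1$, $p_{n+1}=a_np_n+p_{n-1}$, $q_{n+1}=a_nq_n+q_{n-1}$, $d_n(\alpha)=|q_n\alpha-p_n|$, and $N(\alpha,\epsilon)=\inf\{n\ge0:d_n(\alpha)\le\epsilon\}$. *)

theory Defs
  imports Complex_Main
begin

definition farey :: "nat \<Rightarrow> real set" where
  "farey Q = {real p / real q | p q. 1 \<le> p \<and> p \<le> q \<and> q \<le> Q \<and> coprime p q}"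

definition gauss :: "real \<Rightarrow> real" where
  "gauss x = 1 / x - of_int \<lfloor>1 / x\<rfloor>"

definition cf_a :: "real \<Rightarrow> nat \<Rightarrow> nat" where
  "cf_a \<alpha> n = nat \<lfloor>1 / (gauss ^^ (n - 1)) \<alpha>\<rfloor>"

fun cf_p :: "real \<Rightarrow> nat \<Rightarrow> nat" where
  "cf_p \<alpha> 0 = 1"
| "cf_p \<alpha> (Suc 0) = 0"
| "cf_p \<alpha> (Suc (Suc n)) = cf_a \<alpha> (Suc n) * cf_p \<alpha> (Suc n) + cf_p \<alpha> n"

fun cf_q :: "real \<Rightarrow> nat \<Rightarrow> nat" where
  "cf_q \<alpha> 0 = 0"
| "cf_q \<alpha> (Suc 0) = 1"
| "cf_q \<alpha> (Suc (Suc n)) = cf_a \<alpha> (Suc n) * cf_q \<alpha> (Suc n) + cf_q \<alpha> n"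

definition cf_d :: "real \<Rightarrow> nat \<Rightarrow> real" where
  "cf_d \<alpha> n = \<bar>real (cf_q \<alpha> n) * \<alpha> - real (cf_p \<alpha> n)\<bar>"

definition cf_N :: "real \<Rightarrow> real \<Rightarrow> nat" where
  "cf_N \<alpha> \<epsilon> = (LEAST n. cf_d \<alpha> n \<le> \<epsilon>)"

end

theory Submission
  imports Defs
begin



definition xx :: "real \<Rightarrow> nat \<Rightarrow> real" where "xx \<alpha> n = (gauss ^^ n) \<alpha>"
definition DD :: "real \<Rightarrow> nat \<Rightarrow> real" where
  "DD \<alpha> n = real (cf_q \<alpha> n) * \<alpha> - real (cf_p \<alpha> n)"

lemma gauss_props:
  assumes "0 < x" "x < 1" "x \<notin> \<rat>"
  shows "0 < gauss x \<and> gauss x < 1 \<and> gauss x \<notin> \<rat> \<and> 1 \<le> \<lfloor>1/x\<rfloor>"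
proof -
  have nq: "1/x \<notin> \<rat>"
  proof
    assume "1/x \<in> \<rat>"
    then have "1/(1/x) \<in> \<rat>" by (rule Rats_divide[OF Rats_1])
    with assms show False by simp
  qed
  have g: "gauss x = 1/x - of_int \<lfloor>1/x\<rfloor>" by (simp add: gauss_def)
  have f1: "of_int \<lfloor>1/x\<rfloor> \<le> 1/x" by simp
  have f2: "of_int \<lfloor>1/x\<rfloor> \<noteq> 1/x" using nq by (metis Rats_of_int)
  have f3: "1/x < of_int \<lfloor>1/x\<rfloor> + 1" by linarith
  have "1 < 1/x" using assms by simp
  then have f4: "1 \<le> \<lfloor>1/x\<rfloor>" by linarith
  have "gauss x \<notin> \<rat>"
  proof
    assume "gauss x \<in> \<rat>"
    then have "gauss x + of_int \<lfloor>1/x\<rfloor> \<in> \<rat>" by (simp add: Rats_add)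
    with nq g show False by simp
  qed
  moreover have "gauss x > 0" using g f1 f2 by linarith
  moreover have "gauss x < 1" using g f3 by linarith
  ultimately show ?thesis using f4 by blast
qed

lemma xx_props:
  assumes "0 < \<alpha>" "\<alpha> < 1" "\<alpha> \<notin> \<rat>"
  shows "0 < xx \<alpha> n \<and> xx \<alpha> n < 1 \<and> xx \<alpha> n \<notin> \<rat>"
proof (induction n)
  case 0 then show ?case using assms by (simp add: xx_def)
next
  case (Suc n)
  then show ?case using gauss_props[of "xx \<alpha> n"] by (simp add: xx_def)
qed

lemma a_Suc_real:
  assumes "0 < \<alpha>" "\<alpha> < 1" "\<alpha> \<notin> \<rat>"
  shows "real (cf_a \<alpha> (Suc n)) = of_int \<lfloor>1 / xx \<alpha> n\<rfloor> \<and> 1 \<le> cf_a \<alpha> (Suc n)"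
proof -
  have h: "1 \<le> \<lfloor>1 / xx \<alpha> n\<rfloor>" using gauss_props[of "xx \<alpha> n"] xx_props[OF assms, of n] by blast
  have "cf_a \<alpha> (Suc n) = nat \<lfloor>1 / xx \<alpha> n\<rfloor>" by (simp add: cf_a_def xx_def)
  moreover obtain k where k: "k = \<lfloor>1 / xx \<alpha> n\<rfloor>" by blast
  moreover have "real (nat k) = of_int k" unfolding k by (rule of_nat_nat) (use h in linarith)
  moreover have "1 \<le> nat k" using h k by linarith
  ultimately show ?thesis by simp
qed

lemma xx_Suc:
  assumes "0 < \<alpha>" "\<alpha> < 1" "\<alpha> \<notin> \<rat>"
  shows "xx \<alpha> (Suc n) = 1 / xx \<alpha> n - real (cf_a \<alpha> (Suc n))"
  using a_Suc_real[OF assms, of n] by (simp add: xx_def gauss_def)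

lemma DD_rec: "DD \<alpha> (Suc (Suc n)) = real (cf_a \<alpha> (Suc n)) * DD \<alpha> (Suc n) + DD \<alpha> n"
  by (simp add: DD_def algebra_simps)

lemma DD_Suc:
  assumes "0 < \<alpha>" "\<alpha> < 1" "\<alpha> \<notin> \<rat>"
  shows "DD \<alpha> (Suc n) = - xx \<alpha> n * DD \<alpha> n"
proof (induction n)
  case 0 then show ?case by (simp add: DD_def xx_def)
next
  case (Suc n)
  have xp: "xx \<alpha> n > 0" using xx_props[OF assms] by blast
  have "DD \<alpha> n = - DD \<alpha> (Suc n) / xx \<alpha> n" using Suc xp by (simp add: field_simps)
  then have "DD \<alpha> (Suc (Suc n)) = DD \<alpha> (Suc n) * (real (cf_a \<alpha> (Suc n)) - 1 / xx \<alpha> n)"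
    unfolding DD_rec by (simp add: algebra_simps)
  then show ?case using xx_Suc[OF assms, of n] by simp
qed

lemma DD_nz:
  assumes "0 < \<alpha>" "\<alpha> < 1" "\<alpha> \<notin> \<rat>"
  shows "DD \<alpha> n \<noteq> 0"
proof (induction n)
  case 0 then show ?case by (simp add: DD_def)
next
  case (Suc n) then show ?case using DD_Suc[OF assms] xx_props[OF assms, of n] by simp
qed

lemma DD_sign:
  assumes "0 < \<alpha>" "\<alpha> < 1" "\<alpha> \<notin> \<rat>"
  shows "DD \<alpha> n * DD \<alpha> (Suc n) < 0"
proof -
  have "DD \<alpha> n * DD \<alpha> (Suc n) = - xx \<alpha> n * (DD \<alpha> n)^2"
    using DD_Suc[OF assms] by (simp add: power2_eq_square)
  moreover have "(DD \<alpha> n)^2 > 0" using DD_nz[OF assms] by simp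
  moreover have "xx \<alpha> n > 0" using xx_props[OF assms] by blast
  ultimately show ?thesis by (simp add: mult_pos_pos)
qed

lemma det:
  "real (cf_p \<alpha> (Suc n)) * real (cf_q \<alpha> n) - real (cf_p \<alpha> n) * real (cf_q \<alpha> (Suc n)) = (-1)^(Suc n)"
proof (induction n)
  case 0 then show ?case by simp
next
  case (Suc n) then show ?case by (simp add: algebra_simps)
qed

lemma key_id:
  assumes "0 < \<alpha>" "\<alpha> < 1" "\<alpha> \<notin> \<rat>"
  shows "real (cf_q \<alpha> (Suc n)) * cf_d \<alpha> n + real (cf_q \<alpha> n) * cf_d \<alpha> (Suc n) = 1"
proof -
  have e: "real (cf_q \<alpha> (Suc n)) * DD \<alpha> n - real (cf_q \<alpha> n) * DD \<alpha> (Suc n) = (-1)^(Suc n)"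
    using det[of \<alpha> n] by (simp add: DD_def algebra_simps)
  have s: "DD \<alpha> n * DD \<alpha> (Suc n) < 0" by (rule DD_sign[OF assms])
  have "\<bar>real (cf_q \<alpha> (Suc n)) * DD \<alpha> n - real (cf_q \<alpha> n) * DD \<alpha> (Suc n)\<bar>
     = real (cf_q \<alpha> (Suc n)) * \<bar>DD \<alpha> n\<bar> + real (cf_q \<alpha> n) * \<bar>DD \<alpha> (Suc n)\<bar>"
  proof (cases "DD \<alpha> n > 0")
    case True
    then have "DD \<alpha> (Suc n) < 0" using s by (simp add: mult_less_0_iff)
    moreover have "real (cf_q \<alpha> (Suc n)) * DD \<alpha> n \<ge> 0" using True by simp
    moreover have "real (cf_q \<alpha> n) * DD \<alpha> (Suc n) \<le> 0" using \<open>DD \<alpha> (Suc n) < 0\<close> by (simp add: mult_nonneg_nonpos)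
    ultimately have "real (cf_q \<alpha> (Suc n)) * DD \<alpha> n - real (cf_q \<alpha> n) * DD \<alpha> (Suc n) \<ge> 0" by linarith
    then show ?thesis using True \<open>DD \<alpha> (Suc n) < 0\<close>
      by (simp add: abs_of_nonneg abs_of_neg abs_of_pos)
  next
    case False
    then have "DD \<alpha> n < 0" "DD \<alpha> (Suc n) > 0" using s DD_nz[OF assms, of n] by (auto simp: mult_less_0_iff)
    moreover have "real (cf_q \<alpha> (Suc n)) * DD \<alpha> n \<le> 0" using \<open>DD \<alpha> n < 0\<close> by (simp add: mult_nonneg_nonpos)
    moreover have "real (cf_q \<alpha> n) * DD \<alpha> (Suc n) \<ge> 0" using \<open>DD \<alpha> (Suc n) > 0\<close> by simp
    ultimately have "real (cf_q \<alpha> (Suc n)) * DD \<alpha> n - real (cf_q \<alpha> n) * DD \<alpha> (Suc n) \<le> 0" by linarith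
    then show ?thesis using \<open>DD \<alpha> n < 0\<close> \<open>DD \<alpha> (Suc n) > 0\<close>
      by (simp add: abs_of_nonpos abs_of_neg abs_of_pos)
  qed
  then show ?thesis using e by (simp add: cf_d_def DD_def[symmetric])
qed


lemma q_mono:
  assumes "0 < \<alpha>" "\<alpha> < 1" "\<alpha> \<notin> \<rat>"
  shows "cf_q \<alpha> n \<le> cf_q \<alpha> (Suc n)"
proof (cases n)
  case 0 then show ?thesis by simp
next
  case (Suc m)
  have "1 \<le> cf_a \<alpha> (Suc m)" using a_Suc_real[OF assms] by blast
  then have h: "cf_q \<alpha> (Suc m) \<le> cf_a \<alpha> (Suc m) * cf_q \<alpha> (Suc m)" by (metis mult_1 mult_le_mono1)
  have eq: "cf_q \<alpha> (Suc (Suc m)) = cf_a \<alpha> (Suc m) * cf_q \<alpha> (Suc m) + cf_q \<alpha> m" by simp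
  show ?thesis unfolding Suc using eq h by linarith
qed

lemma q_incseq:
  assumes "0 < \<alpha>" "\<alpha> < 1" "\<alpha> \<notin> \<rat>"
  shows "incseq (cf_q \<alpha>)"
  using q_mono[OF assms] by (simp add: incseq_SucI)

lemma q_pos:
  assumes "0 < \<alpha>" "\<alpha> < 1" "\<alpha> \<notin> \<rat>" "1 \<le> n"
  shows "1 \<le> cf_q \<alpha> n"
proof -
  have "cf_q \<alpha> 1 \<le> cf_q \<alpha> n" using incseqD[OF q_incseq[OF assms(1-3)] assms(4)] .
  then show ?thesis by simp
qed

lemma q_grow:
  assumes "0 < \<alpha>" "\<alpha> < 1" "\<alpha> \<notin> \<rat>"
  shows "n \<le> cf_q \<alpha> (Suc n)"
proof (induction n)
  case 0 then show ?case by simp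
next
  case (Suc n)
  show ?case
  proof (cases n)
    case 0 then show ?thesis using q_mono[OF assms, of 1] by simp
  next
    case (Suc m)
    have "1 \<le> cf_q \<alpha> n" using q_pos[OF assms] Suc by simp
    moreover have "cf_q \<alpha> (Suc n) \<le> cf_a \<alpha> (Suc n) * cf_q \<alpha> (Suc n)"
      using a_Suc_real[OF assms, of n] by (metis mult_1 mult_le_mono1)
    moreover have "cf_q \<alpha> (Suc (Suc n)) = cf_a \<alpha> (Suc n) * cf_q \<alpha> (Suc n) + cf_q \<alpha> n" by simp
    ultimately have "cf_q \<alpha> (Suc n) + 1 \<le> cf_q \<alpha> (Suc (Suc n))" by linarith
    then show ?thesis using Suc.IH by simp
  qed
qed

lemma det_int:
  "int (cf_p \<alpha> (Suc n)) * int (cf_q \<alpha> n) - int (cf_p \<alpha> n) * int (cf_q \<alpha> (Suc n)) = (-1)^(Suc n)"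
proof (induction n)
  case 0 then show ?case by simp
next
  case (Suc n) then show ?case by (simp add: algebra_simps)
qed

lemma abs_add_same_sign: "(a::real) * b \<ge> 0 \<Longrightarrow> \<bar>a + b\<bar> \<ge> \<bar>a\<bar>"
  by (cases "a \<ge> 0"; cases "b \<ge> 0") (auto simp: mult_less_0_iff zero_le_mult_iff)

lemma best_approx:
  assumes "0 < \<alpha>" "\<alpha> < 1" "\<alpha> \<notin> \<rat>"
    and "1 \<le> m" "m < cf_q \<alpha> (Suc n)"
  shows "cf_d \<alpha> n \<le> \<bar>real m * \<alpha> - of_int k\<bar>"
proof -
  define P0 where "P0 = int (cf_p \<alpha> n)"
  define Q0 where "Q0 = int (cf_q \<alpha> n)"
  define P1 where "P1 = int (cf_p \<alpha> (Suc n))"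
  define Q1 where "Q1 = int (cf_q \<alpha> (Suc n))"
  define e :: int where "e = (-1)^(Suc n)"
  have det: "P1 * Q0 - P0 * Q1 = e" using det_int[of \<alpha> n] by (simp add: P0_def Q0_def P1_def Q1_def e_def)
  have ee: "e * e = 1" by (simp add: e_def flip: power_add)
  define s where "s = e * (P1 * int m - Q1 * k)"
  define t where "t = e * (Q0 * k - P0 * int m)"
  have "s * Q0 + t * Q1 = e * (int m * (P1 * Q0 - P0 * Q1))" by (simp add: s_def t_def algebra_simps)
  then have hm: "int m = s * Q0 + t * Q1" using det ee by simp
  have "s * P0 + t * P1 = e * (k * (P1 * Q0 - P0 * Q1))" by (simp add: s_def t_def algebra_simps)
  then have hk: "k = s * P0 + t * P1" using det ee by simp
  have Q0nn: "Q0 \<ge> 0" by (simp add: Q0_def)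
  have mQ1: "int m < Q1" using assms(5) by (simp add: Q1_def)
  have m1: "1 \<le> int m" using assms(4) by simp
  have rm: "real m = of_int s * of_int Q0 + of_int t * of_int Q1"
    using arg_cong[OF hm, of "of_int :: int \<Rightarrow> real"] by simp
  have rk: "of_int k = of_int s * of_int P0 + of_int t * (of_int P1 :: real)"
    using arg_cong[OF hk, of "of_int :: int \<Rightarrow> real"] by simp
  have lin: "real m * \<alpha> - of_int k = of_int s * DD \<alpha> n + of_int t * DD \<alpha> (Suc n)"
    unfolding rm rk by (simp add: DD_def P0_def Q0_def P1_def Q1_def algebra_simps)
  have s0: "s \<noteq> 0"
  proof
    assume "s = 0"
    then have "int m = t * Q1" using hm by simp
    moreover have "Q1 \<ge> 0" by (simp add: Q1_def)
    moreover have "t * Q1 \<ge> Q1 \<or> t * Q1 \<le> 0"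
    proof (cases "t \<ge> 1")
      case True then show ?thesis using \<open>Q1 \<ge> 0\<close> by (simp add: mult_le_cancel_right1)
    next
      case False then show ?thesis using \<open>Q1 \<ge> 0\<close> by (simp add: mult_nonpos_nonneg)
    qed
    ultimately show False using mQ1 m1 by linarith
  qed
  have st: "s * t \<le> 0"
  proof (rule ccontr)
    assume "\<not> s * t \<le> 0"
    then have "0 < s * t" by simp
    then have "(s > 0 \<and> t > 0) \<or> (s < 0 \<and> t < 0)" by (simp add: zero_less_mult_iff)
    then show False
    proof
      assume "s > 0 \<and> t > 0"
      then have "s * Q0 \<ge> 0" "t * Q1 \<ge> Q1" using Q0nn mQ1 m1 by auto
      then show False using hm mQ1 by linarith
    next
      assume "s < 0 \<and> t < 0"
      then have "s * Q0 \<le> 0" "t * Q1 \<le> 0" using Q0nn mQ1 m1 by (auto simp: mult_nonpos_nonneg)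
      then show False using hm m1 by linarith
    qed
  qed
  have "(of_int s * DD \<alpha> n) * (of_int t * DD \<alpha> (Suc n)) = of_int (s * t) * (DD \<alpha> n * DD \<alpha> (Suc n))"
    by (simp add: algebra_simps)
  also have "\<dots> \<ge> 0"
  proof -
    have "(of_int (s*t)::real) \<le> 0" using st by linarith
    then show ?thesis using DD_sign[OF assms(1-3), of n] by (intro mult_nonpos_nonpos) auto
  qed
  finally have "\<bar>of_int s * DD \<alpha> n\<bar> \<le> \<bar>real m * \<alpha> - of_int k\<bar>"
    unfolding lin by (rule abs_add_same_sign)
  moreover have "\<bar>of_int s * DD \<alpha> n\<bar> \<ge> \<bar>DD \<alpha> n\<bar>"
  proof -
    have "\<bar>(of_int s::real)\<bar> \<ge> 1" using s0 by linarith
    then show ?thesis by (simp add: abs_mult mult_le_cancel_right1)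
  qed
  ultimately show ?thesis by (simp add: cf_d_def DD_def)
qed



lemma classify:
  fixes \<epsilon> \<alpha> :: real and p q p' q' Q m k :: nat
  assumes a0: "0 < \<alpha>" and a1: "\<alpha> < 1" and eQ: "\<epsilon> \<le> 1 / real Q"
    and "1 \<le> p" "p \<le> q" "q \<le> Q" "1 \<le> p'" "p' \<le> q'" "q' \<le> Q"
    and lo: "real p / real q < \<alpha>" and hi: "\<alpha> < real p' / real q'"
    and nf: "\<not> (\<exists>x\<in>farey Q. real p / real q < x \<and> x < real p' / real q')"
    and m1: "1 \<le> m" and mQ: "m \<le> Q" and close: "\<bar>real m * \<alpha> - real k\<bar> \<le> \<epsilon>"
  shows "k * q = p * m \<or> k * q' = p' * m"
proof -
  have qp: "real q > 0" "real q' > 0" "real Q > 0" using assms by auto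
  have "1 / real Q \<le> 1 / real q" using qp \<open>q \<le> Q\<close> by (simp add: field_simps)
  then have eq: "\<epsilon> \<le> 1 / real q" using eQ by linarith
  have "1 / real Q \<le> 1 / real q'" using qp \<open>q' \<le> Q\<close> by (simp add: field_simps)
  then have eq': "\<epsilon> \<le> 1 / real q'" using eQ by linarith
  have "1 / real Q \<le> 1" using \<open>q \<le> Q\<close> \<open>1 \<le> p\<close> \<open>p \<le> q\<close> by simp
  then have e1: "\<epsilon> \<le> 1" using eQ by linarith
  have pq1: "1 / real q \<le> real p / real q" using \<open>1 \<le> p\<close> qp by (simp add: divide_right_mono)
  have k0: "k \<noteq> 0"
  proof
    assume "k = 0"
    then have "real m * \<alpha> \<le> \<epsilon>" using close a0 by simp
    moreover have "\<alpha> \<le> real m * \<alpha>" using m1 a0 by simp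
    ultimately show False using lo pq1 eq by linarith
  qed
  have km: "k \<le> m"
  proof (rule ccontr)
    assume "\<not> k \<le> m"
    then have "real k \<ge> real m + 1" by simp
    moreover have "real m * \<alpha> < real m * 1" using a1 m1 by (intro mult_strict_left_mono) auto
    ultimately show False using close e1 by linarith
  qed
  have inF: "real k / real m \<in> farey Q"
  proof -
    have g0: "gcd k m \<noteq> 0" using k0 by simp
    obtain k1 m1' where kk: "k = k1 * gcd k m" and mm: "m = m1' * gcd k m" and cp: "coprime k1 m1'"
      using gcd_coprime_exists[OF g0] by blast
    have gp: "gcd k m > 0" using g0 by simp
    have "k1 \<ge> 1" using kk k0 by (cases k1) auto
    moreover have "k1 * gcd k m \<le> m1' * gcd k m" using km kk mm by simp
    then have "k1 \<le> m1'" using gp mult_le_cancel2 by blast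
    moreover have "m1' * 1 \<le> m1' * gcd k m" using gp by (intro mult_le_mono2) linarith
    then have "m1' \<le> Q" using mm mQ by simp
    moreover have "real k / real m = (real k1 * real (gcd k m)) / (real m1' * real (gcd k m))"
      using kk mm by (metis of_nat_mult)
    then have "real k / real m = real k1 / real m1'" using gp k0 by simp
    ultimately show ?thesis unfolding farey_def using cp by blast
  qed
  have mp: "real m > 0" using m1 by simp
  from nf inF have "\<not> (real p / real q < real k / real m \<and> real k / real m < real p' / real q')" by blast
  then consider "real k / real m < real p / real q" | "real k / real m = real p / real q"
    | "real k / real m > real p' / real q'" | "real k / real m = real p' / real q'" by linarith
  then show ?thesis
  proof cases
    case 1
    then have "real k * real q < real p * real m" using qp mp by (simp add: field_simps)
    then have "k * q < p * m" by (simp flip: of_nat_mult)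
    then have "k * q + 1 \<le> p * m" by simp
    then have "real (k * q + 1) \<le> real (p * m)" by (simp only: of_nat_le_iff)
    then have d1: "real p * real m - real k * real q \<ge> 1" by simp
    have "real m * \<alpha> - real k = real m * (\<alpha> - real p / real q) + (real p * real m - real k * real q) / real q"
      using qp by (simp add: field_simps)
    moreover have "real m * (\<alpha> - real p / real q) > 0" using mp lo by simp
    moreover have "(real p * real m - real k * real q) / real q \<ge> 1 / real q"
      using d1 qp by (simp add: divide_right_mono)
    ultimately show ?thesis using close eq by linarith
  next
    case 2 then have "real k * real q = real p * real m" using qp mp by (simp add: field_simps)
    then show ?thesis by (simp flip: of_nat_mult)
  next
    case 3
    then have "real p' * real m < real k * real q'" using qp mp by (simp add: field_simps)
    then have "p' * m < k * q'" by (simp flip: of_nat_mult)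
    then have "p' * m + 1 \<le> k * q'" by simp
    then have "real (p' * m + 1) \<le> real (k * q')" by (simp only: of_nat_le_iff)
    then have d1: "real k * real q' - real p' * real m \<ge> 1" by simp
    have "real k - real m * \<alpha> = real m * (real p' / real q' - \<alpha>) + (real k * real q' - real p' * real m) / real q'"
      using qp by (simp add: field_simps)
    moreover have "real m * (real p' / real q' - \<alpha>) > 0" using mp hi by simp
    moreover have "(real k * real q' - real p' * real m) / real q' \<ge> 1 / real q'"
      using d1 qp by (simp add: divide_right_mono)
    ultimately show ?thesis using close eq' by linarith
  next
    case 4 then have "real k * real q' = real p' * real m" using qp mp by (simp add: field_simps)
    then show ?thesis by (simp flip: of_nat_mult)
  qed
qed



lemma pick:
  fixes \<alpha> \<epsilon> :: real and p q m k :: nat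
  assumes cp: "coprime p q" and q1: "1 \<le> q" and kq: "k * q = p * m" and m1: "1 \<le> m"
    and close: "\<bar>real m * \<alpha> - real k\<bar> \<le> \<epsilon>"
    and below: "\<And>m' k'. 1 \<le> m' \<Longrightarrow> m' < m \<Longrightarrow> \<epsilon> < \<bar>real m' * \<alpha> - of_int k'\<bar>"
  shows "m = q \<and> k = p"
proof -
  have "q dvd p * m" using kq by (metis dvd_triv_right)
  then have "q dvd m" using cp by (metis coprime_commute coprime_dvd_mult_right_iff coprime_dvd_mult_left_iff)
  then obtain c where mc: "m = q * c" by blast
  then have "k * q = (p * c) * q" using kq by (simp add: algebra_simps)
  then have kc: "k = p * c" using q1 by simp
  have c1: "c \<ge> 1" using mc m1 by (cases c) auto
  have eqv: "real m * \<alpha> - real k = real c * (real q * \<alpha> - real p)" using mc kc by (simp add: algebra_simps)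
  have "c = 1"
  proof (rule ccontr)
    assume "c \<noteq> 1"
    then have "c \<ge> 2" using c1 by simp
    then have "q * 2 \<le> q * c" by simp
    then have "q < m" using mc q1 by linarith
    then have "\<epsilon> < \<bar>real q * \<alpha> - of_int (int p)\<bar>" using below q1 by blast
    moreover have "\<bar>real q * \<alpha> - real p\<bar> \<le> real c * \<bar>real q * \<alpha> - real p\<bar>" using c1
      by (simp add: mult_le_cancel_right1)
    ultimately show False using close eqv by (simp add: abs_mult)
  qed
  then show ?thesis using mc kc by simp
qed



theorem lemma5p1:
  fixes \<epsilon> \<alpha> :: real and p q p' q' Q :: nat
  assumes "0 < \<epsilon>" "\<epsilon> < 1"
    and "Q = nat \<lfloor>1 / \<epsilon>\<rfloor>"
    and "0 < \<alpha>" "\<alpha> < 1" "\<alpha> \<notin> \<rat>"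
    and "1 \<le> p" "p \<le> q" "q \<le> Q" "coprime p q"
    and "1 \<le> p'" "p' \<le> q'" "q' \<le> Q" "coprime p' q'"
    and "real p / real q < \<alpha>" "\<alpha> < real p' / real q'"
    and "\<not> (\<exists>x\<in>farey Q. real p / real q < x \<and> x < real p' / real q')"
  shows
    "(\<alpha> < (real p' - \<epsilon>) / real q' \<longrightarrow>
        cf_q \<alpha> (cf_N \<alpha> \<epsilon>) = q \<and> cf_d \<alpha> (cf_N \<alpha> \<epsilon>) = real q * \<alpha> - real p)
   \<and> ((real p' - \<epsilon>) / real q' \<le> \<alpha> \<and> \<alpha> \<le> (real p + \<epsilon>) / real q \<longrightarrow>
        cf_q \<alpha> (cf_N \<alpha> \<epsilon>) = min q q'
      \<and> (q < q' \<longrightarrow> cf_d \<alpha> (cf_N \<alpha> \<epsilon>) = real q * \<alpha> - real p)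
      \<and> (q' < q \<longrightarrow> cf_d \<alpha> (cf_N \<alpha> \<epsilon>) = real p' - real q' * \<alpha>))
   \<and> ((real p + \<epsilon>) / real q < \<alpha> \<longrightarrow>
        cf_q \<alpha> (cf_N \<alpha> \<epsilon>) = q' \<and> cf_d \<alpha> (cf_N \<alpha> \<epsilon>) = real p' - real q' * \<alpha>)"
proof -
  note ai = assms(4-6)
  have qp: "real q > 0" "real q' > 0" using assms by auto
  have ie: "1 < 1 / \<epsilon>" using assms(1,2) by simp
  have fl: "1 \<le> \<lfloor>1 / \<epsilon>\<rfloor>" using ie by linarith
  have rQ: "real Q = of_int \<lfloor>1 / \<epsilon>\<rfloor>" unfolding assms(3) by (rule of_nat_nat) (use fl in linarith)
  have Q1: "Q \<ge> 1" using fl assms(3) by linarith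
  have "real Q \<le> 1 / \<epsilon>" using rQ by simp
  then have eQ: "\<epsilon> \<le> 1 / real Q" using assms(1) Q1 by (simp add: field_simps)
  have "1 / \<epsilon> < real Q + 1" using rQ by linarith
  then have eQ1: "1 / (real Q + 1) < \<epsilon>" using assms(1) by (simp add: field_simps)
  have exQ: "\<exists>n. Q < cf_q \<alpha> n" using q_grow[OF ai, of "Q+1"] by (intro exI[of _ "Suc (Q+1)"]) simp
  define n1 where "n1 = (LEAST n. Q < cf_q \<alpha> n)"
  have n1a: "Q < cf_q \<alpha> n1" unfolding n1_def using exQ by (rule LeastI_ex)
  have "n1 \<noteq> 0" using n1a by (metis cf_q.simps(1) not_less_zero)
  moreover have "n1 \<noteq> 1" using n1a Q1 by auto
  ultimately obtain n0 where n0: "n1 = Suc n0" "1 \<le> n0" by (metis One_nat_def less_one not0_implies_Suc not_less)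
  have qn0: "cf_q \<alpha> n0 \<le> Q" using not_less_Least[of n0 "\<lambda>n. Q < cf_q \<alpha> n"] n0 n1_def by simp
  have "real (cf_q \<alpha> (Suc n0)) * cf_d \<alpha> n0 \<le> 1"
    using key_id[OF ai, of n0] by (smt (verit) cf_d_def abs_ge_zero mult_nonneg_nonneg of_nat_0_le_iff)
  moreover have "real Q + 1 \<le> real (cf_q \<alpha> (Suc n0))" using n1a n0 by simp
  moreover have "cf_d \<alpha> n0 \<ge> 0" by (simp add: cf_d_def)
  ultimately have "(real Q + 1) * cf_d \<alpha> n0 \<le> 1" by (smt (verit) mult_right_mono)
  then have "cf_d \<alpha> n0 \<le> 1 / (real Q + 1)" by (simp add: field_simps)
  then have dn0: "cf_d \<alpha> n0 \<le> \<epsilon>" using eQ1 by linarith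
  define N where "N = cf_N \<alpha> \<epsilon>"
  have dN: "cf_d \<alpha> N \<le> \<epsilon>" unfolding N_def cf_N_def using dn0 by (rule LeastI)
  have Nn0: "N \<le> n0" unfolding N_def cf_N_def using dn0 by (rule Least_le)
  have "cf_d \<alpha> 0 = 1" by (simp add: cf_d_def)
  then have "N \<noteq> 0" using dN assms(2) by (metis not_less)
  then obtain M where NM: "N = Suc M" using not0_implies_Suc by blast
  have dM: "\<not> cf_d \<alpha> M \<le> \<epsilon>" using not_less_Least[of M "\<lambda>n. cf_d \<alpha> n \<le> \<epsilon>"] NM
    unfolding N_def cf_N_def by simp
  have below: "\<epsilon> < \<bar>real m' * \<alpha> - of_int k'\<bar>" if "1 \<le> m'" "m' < cf_q \<alpha> N" for m' k'
    using best_approx[OF ai that(1), of M k'] that(2) NM dM by simp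
  have qNQ: "cf_q \<alpha> N \<le> Q" using incseqD[OF q_incseq[OF ai] Nn0] qn0 by simp
  have qN1: "1 \<le> cf_q \<alpha> N" using q_pos[OF ai] NM by simp
  have close: "\<bar>real (cf_q \<alpha> N) * \<alpha> - real (cf_p \<alpha> N)\<bar> \<le> \<epsilon>" using dN by (simp add: cf_d_def)
  have cls: "cf_p \<alpha> N * q = p * cf_q \<alpha> N \<or> cf_p \<alpha> N * q' = p' * cf_q \<alpha> N"
    by (rule classify[OF assms(4,5) eQ assms(7,8,9,11,12,13,15,16,17) qN1 qNQ close])
  have u0: "real q * \<alpha> - real p > 0" using assms(15) qp by (simp add: field_simps)
  have v0: "real p' - real q' * \<alpha> > 0" using assms(16) qp by (simp add: field_simps)
  have out: "(cf_q \<alpha> N = q \<and> cf_d \<alpha> N = real q * \<alpha> - real p) \<or>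
             (cf_q \<alpha> N = q' \<and> cf_d \<alpha> N = real p' - real q' * \<alpha>)"
    using cls
  proof
    assume "cf_p \<alpha> N * q = p * cf_q \<alpha> N"
    from pick[OF assms(10) _ this qN1 close below] assms(7,8)
    have "cf_q \<alpha> N = q \<and> cf_p \<alpha> N = p" by linarith
    then show ?thesis using u0 by (simp add: cf_d_def)
  next
    assume "cf_p \<alpha> N * q' = p' * cf_q \<alpha> N"
    from pick[OF assms(14) _ this qN1 close below] assms(11,12)
    have "cf_q \<alpha> N = q' \<and> cf_p \<alpha> N = p'" by linarith
    then show ?thesis using v0 by (simp add: cf_d_def abs_minus_commute)
  qed
  have bq: "\<not> q < cf_q \<alpha> N" if "real q * \<alpha> - real p \<le> \<epsilon>"
    using below[of q "int p"] that u0 assms(7,8) by auto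
  have bq': "\<not> q' < cf_q \<alpha> N" if "real p' - real q' * \<alpha> \<le> \<epsilon>"
    using below[of q' "int p'"] that v0 assms(11,12) by auto
  have c1: "\<alpha> < (real p' - \<epsilon>) / real q' \<longleftrightarrow> \<epsilon> < real p' - real q' * \<alpha>"
    using qp by (simp add: field_simps)
  have c2: "(real p' - \<epsilon>) / real q' \<le> \<alpha> \<longleftrightarrow> real p' - real q' * \<alpha> \<le> \<epsilon>"
    using qp by (simp add: field_simps)
  have c3: "\<alpha> \<le> (real p + \<epsilon>) / real q \<longleftrightarrow> real q * \<alpha> - real p \<le> \<epsilon>"
    using qp by (simp add: field_simps)
  have c4: "(real p + \<epsilon>) / real q < \<alpha> \<longleftrightarrow> \<epsilon> < real q * \<alpha> - real p"
    using qp by (simp add: field_simps)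
  show ?thesis unfolding N_def[symmetric] c1 c2 c3 c4
    using out dN bq bq' by (auto simp: min_def)
qed

end
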